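(* Let $\mu_1,\mu_2,\mu_3$ be three mass distributions in $\mathbb{R}^2$ and let $\ell$ be any line in the plane. Then there exist two lines $\ell_1,\ell_2$ (where a line at infinity is allowed) such that $\{\ell_1,\ell_2\}$ simultaneously bisects $\mu_1,\mu_2,\mu_3$ and $\ell_1$ is parallel to $\ell$.
   Context: A mass distribution $\mu$ on $\mathbb{R}^2$ is a measure such that all open subsets are measurable, $0<\mu(\mathbb{R}^2)<\infty$, and $\mu(S)=0$ for every lower-dimensional subset $S$. For a finite set $\mathcal{L}$ of oriented lines, each $\ell'\in\mathcal{L}$ has positive side $\ell'^+=\{x: g(x)\ge 0\}$ for a defining affine function $g(x)=a_1x_1+a_2x_2+a_0$; lines at infinity ($g\equiv a_0\neq 0$ constant) are allowed, with $\ell'^+=\mathbb{R}^2$, $\ell'^-=\emptyset$. Let $\lambda(p)$ be the number of lines of $\mathcal{L}$ having $p$ on their positive side, $R^+=\{p:\lambda(p)\text{ even}\}$, $R^-=\{p:\lambda(p)\text{ odd}\}$. $\mathcal{L}$ simultaneously bisects $\mu_1,\dots,\mu_k$ if $\mu_i(R^+)=\mu_i(R^-)$ for all $i$; an unoriented set of lines bisects if some orientation does. A line at infinity is considered parallel to every line. *)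

theory Defs
  imports "HOL-Analysis.Analysis"
begin

definition mass_distribution :: "(real^2) measure \<Rightarrow> bool" where
  "mass_distribution M \<longleftrightarrow>
     space M = UNIV \<and>
     (\<forall>U. open U \<longrightarrow> U \<in> sets M) \<and>
     0 < emeasure M UNIV \<and> emeasure M UNIV < \<infinity> \<and>
     (\<forall>S \<in> sets M. aff_dim S < 2 \<longrightarrow> emeasure M S = 0)"

text \<open>An oriented (generalised) line is given by its defining affine function
  g(x) = a \<bullet> x + c, encoded as the pair (a, c), with (a, c) \<noteq> (0, 0).
  If a = 0 (and c \<noteq> 0) it is a line at infinity.\<close>

type_synonym oline = "(real^2) \<times> real"

definition is_oline :: "oline \<Rightarrow> bool" where
  "is_oline L \<longleftrightarrow> fst L \<noteq> 0 \<or> snd L \<noteq> 0"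

definition is_proper_line :: "oline \<Rightarrow> bool" where
  "is_proper_line L \<longleftrightarrow> fst L \<noteq> 0"

definition pos_side :: "oline \<Rightarrow> (real^2) set" where
  "pos_side L = {x. fst L \<bullet> x + snd L \<ge> 0}"

definition parallel :: "oline \<Rightarrow> oline \<Rightarrow> bool" where
  "parallel L L' \<longleftrightarrow> fst L = 0 \<or> fst L' = 0 \<or> (\<exists>t. fst L = t *\<^sub>R fst L')"

definition lam :: "oline list \<Rightarrow> real^2 \<Rightarrow> nat" where
  "lam Ls p = length (filter (\<lambda>L. p \<in> pos_side L) Ls)"

definition R_plus :: "oline list \<Rightarrow> (real^2) set" where
  "R_plus Ls = {p. even (lam Ls p)}"

definition R_minus :: "oline list \<Rightarrow> (real^2) set" where
  "R_minus Ls = {p. odd (lam Ls p)}"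

definition bisects :: "oline list \<Rightarrow> (real^2) measure \<Rightarrow> bool" where
  "bisects Ls M \<longleftrightarrow> emeasure M (R_plus Ls) = emeasure M (R_minus Ls)"

end

theory Submission
  imports Defs "HOL-Homology.Homology"
begin


type_synonym R3 = "real \<times> real \<times> real"

definition fromN :: "(nat \<Rightarrow> real) \<Rightarrow> R3" where
  "fromN x = (x 0, x 1, x 2)"
definition toN :: "R3 \<Rightarrow> nat \<Rightarrow> real" where
  "toN v = (\<lambda>i. if i = 0 then fst v else if i = 1 then fst (snd v) else if i = 2 then snd (snd v) else 0)"

abbreviation S2 :: "R3 set" where "S2 \<equiv> sphere 0 1"

lemma norm_R3: "norm (v::R3) = sqrt ((fst v)^2 + (fst (snd v))^2 + (snd (snd v))^2)"
  by (cases v) (auto simp: norm_Pair)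

lemma in_S2: "norm (v::R3) = 1 \<longleftrightarrow> (fst v)^2 + (fst (snd v))^2 + (snd (snd v))^2 = 1"
  by (simp add: norm_R3)

lemma topspace_nsphere2: "x \<in> topspace (nsphere 2) \<longleftrightarrow> (\<forall>i\<ge>3. x i = 0) \<and> (x 0)^2 + (x 1)^2 + (x 2)^2 = 1"
  by (simp add: nsphere_def topspace_Euclidean_space numeral_3_eq_3 numeral_2_eq_2 add.assoc)

lemma cont_fromN: "continuous_map (nsphere 2) (top_of_set S2) fromN"
proof -
  have "continuous_map (nsphere 2) euclidean fromN"
    unfolding fromN_def
    by (simp flip: prod_topology_euclidean add: continuous_map_paired continuous_map_nsphere_projection)
  moreover have "fromN x \<in> S2" if "x \<in> topspace (nsphere 2)" for x
    using that by (simp add: topspace_nsphere2 in_S2 fromN_def)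
  ultimately show ?thesis
    by (simp add: continuous_map_in_subtopology image_subset_iff)
qed

lemma cont_toN: "continuous_map (top_of_set S2) (nsphere 2) toN"
proof -
  have "continuous_map (top_of_set S2) (powertop_real UNIV) toN"
    unfolding toN_def continuous_map_componentwise_UNIV
  proof
    fix i :: nat
    show "continuous_map (top_of_set S2) euclideanreal
          (\<lambda>x. if i = 0 then fst x else if i = 1 then fst (snd x) else if i = 2 then snd (snd x) else 0)"
      by (cases "i=0"; cases "i=1"; cases "i=2") (auto intro!: continuous_intros)
  qed
  moreover have "toN v \<in> topspace (nsphere 2)" if "v \<in> S2" for v
    using that by (simp add: topspace_nsphere2 in_S2 toN_def)
  ultimately show ?thesis
    by (simp add: nsphere continuous_map_in_subtopology image_subset_iff)
qed

lemma fromN_toN [simp]: "fromN (toN v) = v"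
  by (simp add: fromN_def toN_def)

lemma toN_fromN: "x \<in> topspace (nsphere 2) \<Longrightarrow> toN (fromN x) = x"
  by (auto simp: fromN_def toN_def topspace_nsphere2 fun_eq_iff)

lemma fromN_in: "x \<in> topspace (nsphere 2) \<Longrightarrow> fromN x \<in> S2"
  using cont_fromN continuous_map_image_subset_topspace by fastforce

definition tr :: "(R3 \<Rightarrow> R3) \<Rightarrow> (nat \<Rightarrow> real) \<Rightarrow> nat \<Rightarrow> real" where
  "tr g = toN \<circ> g \<circ> fromN"

lemma cmap_S2: "continuous_map (top_of_set S2) (top_of_set S2) g \<longleftrightarrow> continuous_on S2 g \<and> g \<in> S2 \<rightarrow> S2"
  by (simp add: continuous_map_subtopology_eu)

lemma cont_tr:
  assumes "continuous_on S2 g" "g \<in> S2 \<rightarrow> S2"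
  shows "continuous_map (nsphere 2) (nsphere 2) (tr g)"
proof -
  have "continuous_map (top_of_set S2) (top_of_set S2) g" by (simp add: cmap_S2 assms)
  then have "continuous_map (nsphere 2) (nsphere 2) (toN \<circ> (g \<circ> fromN))"
    by (intro continuous_map_compose[OF continuous_map_compose[OF cont_fromN] cont_toN])
  then show ?thesis by (simp add: tr_def o_assoc)
qed

lemma hom_tr:
  assumes "homotopic_with_canon (\<lambda>_. True) S2 S2 f g"
  shows "Brouwer_degree2 2 (tr f) = Brouwer_degree2 2 (tr g)"
proof -
  have "homotopic_with (\<lambda>_. True) (top_of_set S2) (nsphere 2) (toN \<circ> f) (toN \<circ> g)"
    by (rule homotopic_with_compose_continuous_map_left[OF assms cont_toN]) auto
  then have "homotopic_with (\<lambda>_. True) (nsphere 2) (nsphere 2) ((toN \<circ> f) \<circ> fromN) ((toN \<circ> g) \<circ> fromN)"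
    by (rule homotopic_with_compose_continuous_map_right[OF _ cont_fromN]) auto
  then show ?thesis
    unfolding tr_def by (intro Brouwer_degree2_homotopic) (simp add: o_assoc)
qed

lemma tr_comp:
  assumes "continuous_on S2 f" "f \<in> S2 \<rightarrow> S2" "continuous_on S2 g" "g \<in> S2 \<rightarrow> S2"
  shows "Brouwer_degree2 2 (tr (f \<circ> g)) = Brouwer_degree2 2 (tr f) * Brouwer_degree2 2 (tr g)"
proof -
  have "Brouwer_degree2 2 (tr (f \<circ> g)) = Brouwer_degree2 2 (tr f \<circ> tr g)"
    by (rule Brouwer_degree2_eq) (simp add: tr_def)
  also have "\<dots> = Brouwer_degree2 2 (tr f) * Brouwer_degree2 2 (tr g)"
    by (rule Brouwer_degree2_compose) (use cont_tr assms in auto)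
  finally show ?thesis .
qed

lemma homotopic_canonI:
  fixes h :: "real \<times> 'a::real_normed_vector \<Rightarrow> 'b::real_normed_vector"
  assumes "continuous_on ({0..1} \<times> X) h" "h \<in> ({0..1} \<times> X) \<rightarrow> Y"
    "\<And>x. x \<in> X \<Longrightarrow> h (0, x) = f x" "\<And>x. x \<in> X \<Longrightarrow> h (1, x) = g x"
  shows "homotopic_with_canon (\<lambda>_. True) X Y f g"
proof -
  have "continuous_map (prod_topology (top_of_set {0..1}) (top_of_set X)) (top_of_set Y) h"
  proof -
    have "prod_topology (top_of_set {0..1}) (top_of_set X) = top_of_set ({0..1::real} \<times> X)"
      by (metis prod_topology_euclidean subtopology_Times)
    then show ?thesis using assms by (simp add: continuous_map_subtopology_eu)
  qed
  then show ?thesis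
    using assms by (auto simp: homotopic_with)
qed

lemma deg_neg: "Brouwer_degree2 2 (tr uminus) = -1"
proof -
  define r0 :: "R3 \<Rightarrow> R3" where "r0 = (\<lambda>(a,b,c). (-a,b,c))"
  define H :: "real \<times> R3 \<Rightarrow> R3" where
    "H = (\<lambda>z. (- fst (snd z), cos(pi*fst z) * fst (snd (snd z)) - sin(pi*fst z) * snd (snd (snd z)),
                  sin(pi*fst z) * fst (snd (snd z)) + cos(pi*fst z) * snd (snd (snd z))))"
  have rot: "(cos t * b - sin t * c)^2 + (sin t * b + cos t * c)^2 = b^2 + c^2" for t b c :: real
  proof -
    have "(cos t * b - sin t * c)^2 + (sin t * b + cos t * c)^2 = ((sin t)^2 + (cos t)^2) * (b^2 + c^2)"
    proof -
      have "\<And>x y b c::real. (x * b - y * c)^2 + (y * b + x * c)^2 = (y^2 + x^2) * (b^2 + c^2)"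
        by (simp add: power2_eq_square algebra_simps)
      then show ?thesis by blast
    qed
    then show ?thesis by (simp only: sin_cos_squared_add mult_1)
  qed
  have "homotopic_with_canon (\<lambda>_. True) S2 S2 r0 uminus"
  proof (rule homotopic_canonI[where h=H])
    show "continuous_on ({0..1} \<times> S2) H"
      unfolding H_def by (intro continuous_intros)
    show "H \<in> {0..1} \<times> S2 \<rightarrow> S2"
      by (auto simp: H_def in_S2 add.assoc rot)
  qed (auto simp: H_def r0_def)
  then have "Brouwer_degree2 2 (tr r0) = Brouwer_degree2 2 (tr uminus)"
    by (rule hom_tr)
  moreover have "Brouwer_degree2 2 (tr r0) = -1"
  proof -
    have "Brouwer_degree2 2 (tr r0) = Brouwer_degree2 2 (\<lambda>x i. if i = 0 then -x i else x i)"
      by (rule Brouwer_degree2_eq) (auto simp: tr_def r0_def toN_def fromN_def topspace_nsphere2 fun_eq_iff)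
    then show ?thesis by (simp add: Brouwer_degree2_reflection)
  qed
  ultimately show ?thesis by simp
qed


definition rr :: "R3 \<Rightarrow> real" where "rr x = sqrt ((fst x)^2 + (fst (snd x))^2)"
definition ang :: "R3 \<Rightarrow> real" where "ang x = arccos (fst x / rr x) / pi"
definition Kmap :: "(real \<times> real \<Rightarrow> R3) \<Rightarrow> real \<times> R3 \<Rightarrow> R3" where
  "Kmap h = (\<lambda>z. if fst (snd (snd z)) \<le> 0 then - h (fst z, ang (- snd z)) else h (fst z, ang (snd z)))"

abbreviation Cset :: "R3 set" where "Cset \<equiv> {x \<in> S2. \<bar>snd (snd x)\<bar> \<le> 1/2}"

lemma rr_minus [simp]: "rr (- x) = rr x" by (simp add: rr_def)
lemma rr_minus' [simp]: "rr (-a, -b, -c) = rr (a,b,c)" by (simp add: rr_def)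
lemma norm_minus' [simp]: "norm ((-a, -b, -c)::R3) = norm (a,b,c)" by (simp add: norm_Pair)

lemma rr_pos: "x \<in> Cset \<Longrightarrow> rr x > 0"
proof -
  assume x: "x \<in> Cset"
  then have "(fst x)^2 + (fst (snd x))^2 = 1 - (snd (snd x))^2"
    by (auto simp: in_S2)
  moreover have "(snd (snd x))^2 \<le> 1/4"
    using x abs_le_square_iff[of "snd (snd x)" "1/2"] by (auto simp: power2_eq_square)
  ultimately show ?thesis by (simp add: rr_def)
qed

lemma ratio_bounds: "rr x > 0 \<Longrightarrow> -1 \<le> fst x / rr x \<and> fst x / rr x \<le> 1"
proof -
  assume r: "rr x > 0"
  have "\<bar>fst x\<bar> \<le> rr x" unfolding rr_def
    by (rule real_le_rsqrt) (simp)
  then show ?thesis using r by (auto simp: abs_le_iff divide_le_eq le_divide_eq)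
qed

lemma ang_bounds: "rr x > 0 \<Longrightarrow> 0 \<le> ang x \<and> ang x \<le> 1"
  using arccos_bounded[OF conjunct1[OF ratio_bounds] conjunct2[OF ratio_bounds]]
  by (auto simp: ang_def)

lemma ang_cos: "rr x > 0 \<Longrightarrow> cos (pi * ang x) = fst x / rr x"
  using ratio_bounds[of x] by (simp add: ang_def)

lemma ang_sin: "rr x > 0 \<Longrightarrow> sin (pi * ang x) = \<bar>fst (snd x)\<bar> / rr x"
proof -
  assume r: "rr x > 0"
  have "sin (pi * ang x) = sqrt (1 - (fst x / rr x)^2)"
    using ratio_bounds[OF r] by (simp add: ang_def sin_arccos)
  also have "1 - (fst x / rr x)^2 = ((fst (snd x)) / rr x)^2"
  proof -
    have r2: "(rr x)^2 = (fst x)^2 + (fst (snd x))^2" unfolding rr_def by simp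
    have p: "(fst x)^2 + (fst (snd x))^2 > 0" using r r2 by (metis zero_less_power)
    have gen: "\<And>A B::real. A + B > 0 \<Longrightarrow> 1 - A/(A+B) = B/(A+B)" by (simp add: field_simps)
    show ?thesis using gen[OF p] by (simp add: power_divide r2)
  qed
  also have "sqrt \<dots> = \<bar>fst (snd x)\<bar> / rr x"
    using r by (simp add: real_sqrt_abs' abs_div) 
  finally show ?thesis .
qed

lemma ang_minus: "rr x > 0 \<Longrightarrow> ang (- x) = 1 - ang x"
  using ratio_bounds[of x] by (simp add: ang_def arccos_minus field_simps)


lemma ang_cont: "continuous_on Cset ang"
  unfolding ang_def rr_def
  by (intro continuous_intros ballI conjI)
     (use rr_pos ratio_bounds in \<open>auto simp: rr_def\<close>)

lemma ang_cont_neg: "continuous_on Cset (\<lambda>x. ang (- x))"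
proof -
  have "continuous_on Cset (\<lambda>x. - x)" by (intro continuous_intros)
  moreover have "(\<lambda>x. - x) ` Cset \<subseteq> Cset" by auto
  ultimately show ?thesis using continuous_on_compose2[OF ang_cont] by blast
qed

locale hpath =
  fixes h :: "real \<times> real \<Rightarrow> R3"
  assumes hcont: "continuous_on ({0..1}\<times>{0..1}) h"
    and hS: "h \<in> ({0..1}\<times>{0..1}) \<rightarrow> S2"
    and h0: "\<And>t. t \<in> {0..1} \<Longrightarrow> h (t, 0) = (1,0,0)"
    and h1: "\<And>t. t \<in> {0..1} \<Longrightarrow> h (t, 1) = (-1,0,0)"
begin

lemma agree:
  assumes x: "x \<in> Cset" "fst (snd x) = 0" and t: "t \<in> {0..1}"
  shows "- h (t, ang (- x)) = h (t, ang x)"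
proof -
  have r: "rr x > 0" using rr_pos x by blast
  have rx: "rr x = \<bar>fst x\<bar>" using x by (simp add: rr_def)
  show ?thesis
  proof (cases "fst x > 0")
    case True
    then have "ang x = 0" "ang (- x) = 1" using rx by (auto simp: ang_def)
    then show ?thesis using h0 h1 t by simp
  next
    case False
    then have "fst x < 0" using r rx by auto
    then have "ang x = 1" "ang (- x) = 0" using rx by (auto simp: ang_def)
    then show ?thesis using h0 h1 t by simp
  qed
qed

lemma Kmap_cont: "continuous_on ({0..1} \<times> Cset) (Kmap h)"
  unfolding Kmap_def
proof (rule continuous_on_cases_le)
  have im1: "(\<lambda>z. (fst z, ang (- snd z))) ` {z \<in> {0..1} \<times> Cset. fst (snd (snd z)) \<le> 0} \<subseteq> {0..1}\<times>{0..1}"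
  proof -
    have "ang (- x) \<in> {0..1}" if "x \<in> Cset" for x
      using ang_bounds[of "-x"] rr_pos[OF that] by simp
    then show ?thesis by auto
  qed
  have c1: "continuous_on {z \<in> {0..1} \<times> Cset. fst (snd (snd z)) \<le> 0} (\<lambda>z. (fst z, ang (- snd z)))"
  proof -
    have "continuous_on {z \<in> {0..1} \<times> Cset. fst (snd (snd z)) \<le> 0} (\<lambda>z. ang (- snd z))"
      by (rule continuous_on_compose2[OF ang_cont_neg continuous_on_snd]) auto
    then show ?thesis by (intro continuous_on_Pair continuous_on_fst continuous_on_id)
  qed
  show "continuous_on {z \<in> {0..1} \<times> Cset. fst (snd (snd z)) \<le> 0} (\<lambda>z. - h (fst z, ang (- snd z)))"
  proof -
    have "continuous_on {z \<in> {0..1} \<times> Cset. fst (snd (snd z)) \<le> 0} (\<lambda>z. h (fst z, ang (- snd z)))"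
      using continuous_on_compose2[OF hcont c1 im1] .
    then show ?thesis by (rule continuous_on_minus)
  qed
  have im2: "(\<lambda>z. (fst z, ang (snd z))) ` {z \<in> {0..1} \<times> Cset. 0 \<le> fst (snd (snd z))} \<subseteq> {0..1}\<times>{0..1}"
  proof -
    have "ang x \<in> {0..1}" if "x \<in> Cset" for x
      using ang_bounds[of "x"] rr_pos[OF that] by simp
    then show ?thesis by auto
  qed
  have c2: "continuous_on {z \<in> {0..1} \<times> Cset. 0 \<le> fst (snd (snd z))} (\<lambda>z. (fst z, ang (snd z)))"
  proof -
    have "continuous_on {z \<in> {0..1} \<times> Cset. 0 \<le> fst (snd (snd z))} (\<lambda>z. ang (snd z))"
      by (rule continuous_on_compose2[OF ang_cont continuous_on_snd]) auto
    then show ?thesis by (intro continuous_on_Pair continuous_on_fst continuous_on_id)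
  qed
  show "continuous_on {z \<in> {0..1} \<times> Cset. 0 \<le> fst (snd (snd z))} (\<lambda>z. h (fst z, ang (snd z)))"
    using continuous_on_compose2[OF hcont c2 im2] .
  show "continuous_on ({0..1} \<times> Cset) (\<lambda>z. fst (snd (snd z)))"
    by (intro continuous_intros)
  show "\<And>z. z \<in> {0..1} \<times> Cset \<Longrightarrow> fst (snd (snd z)) = 0 \<Longrightarrow> - h (fst z, ang (- snd z)) = h (fst z, ang (snd z))"
    using agree by auto
qed

lemma Kmap_odd:
  assumes x: "x \<in> Cset" and t: "t \<in> {0..1}"
  shows "Kmap h (t, - x) = - Kmap h (t, x)"
proof -
  have mx: "- x \<in> Cset" using x by auto
  consider "fst (snd x) < 0" | "fst (snd x) > 0" | "fst (snd x) = 0" by linarith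
  then show ?thesis
  proof cases
    case 1 then show ?thesis by (simp add: Kmap_def)
  next
    case 2 then show ?thesis by (simp add: Kmap_def)
  next
    case 3
    then show ?thesis using agree[OF x 3 t] by (simp add: Kmap_def)
  qed
qed

lemma Kmap_S2: "Kmap h \<in> ({0..1} \<times> Cset) \<rightarrow> S2"
proof -
  have "h (t, ang x) \<in> S2" "h (t, ang (-x)) \<in> S2" if "t \<in> {0..1}" "x \<in> Cset" for t x
    using hS that ang_bounds[of x] ang_bounds[of "-x"] rr_pos[OF that(2)] by auto
  then show ?thesis by (auto simp: Kmap_def)
qed

end

lemma unit_proj: "rr x > 0 \<Longrightarrow> (fst x / rr x, fst (snd x) / rr x, 0) \<in> S2"
proof -
  assume r: "rr x > 0"
  have r2: "(rr x)^2 = (fst x)^2 + (fst (snd x))^2" unfolding rr_def by simp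
  have "(fst x / rr x)^2 + (fst (snd x) / rr x)^2 = 1"
    using r by (simp add: power_divide r2[symmetric] flip: add_divide_distrib)
  then show ?thesis by (simp add: in_S2)
qed

lemma (in hpath) Kmap_0:
  assumes hg: "\<And>s. s \<in> {0..1} \<Longrightarrow> h (0, s) = g (cos (pi * s), sin (pi * s), 0)"
    and godd: "\<And>x. x \<in> S2 \<Longrightarrow> g (- x) = - g x"
    and x: "x \<in> Cset"
  shows "Kmap h (0, x) = g (fst x / rr x, fst (snd x) / rr x, 0)"
proof -
  have r: "rr x > 0" using rr_pos x by blast
  have rm: "rr (-x) > 0" using r by simp
  show ?thesis
  proof (cases "fst (snd x) \<le> 0")
    case True
    have "Kmap h (0, x) = - h (0, ang (- x))" using True by (simp add: Kmap_def)
    also have "\<dots> = - g (cos (pi * ang (-x)), sin (pi * ang (-x)), 0)"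
      using hg ang_bounds[OF rm] by simp
    also have "(cos (pi * ang (-x)), sin (pi * ang (-x)), 0::real) = - (fst x / rr x, fst (snd x) / rr x, 0)"
      using ang_cos[OF rm] ang_sin[OF rm] True by simp
    also have "- g (- (fst x / rr x, fst (snd x) / rr x, 0)) = g (fst x / rr x, fst (snd x) / rr x, 0)"
      using godd[OF unit_proj[OF r]] by simp
    finally show ?thesis .
  next
    case False
    have "Kmap h (0, x) = h (0, ang x)" using False by (simp add: Kmap_def)
    also have "\<dots> = g (cos (pi * ang x), sin (pi * ang x), 0)"
      using hg ang_bounds[OF r] by simp
    also have "(cos (pi * ang x), sin (pi * ang x), 0) = (fst x / rr x, fst (snd x) / rr x, 0)"
      using ang_cos[OF r] ang_sin[OF r] False by simp
    finally show ?thesis .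
  qed
qed

lemma (in hpath) Kmap_1:
  assumes hq: "\<And>s. s \<in> {0..1} \<Longrightarrow> h (1, s) = (cos (pi * s), sin (pi * s), 0)"
    and x: "x \<in> Cset"
  shows "Kmap h (1, x) = (fst x / rr x, fst (snd x) / rr x, 0)"
proof -
  have r: "rr x > 0" using rr_pos x by blast
  have rm: "rr (-x) > 0" using r by simp
  show ?thesis
  proof (cases "fst (snd x) \<le> 0")
    case True
    have "Kmap h (1, x) = - h (1, ang (- x))" using True by (simp add: Kmap_def)
    also have "\<dots> = - (cos (pi * ang (-x)), sin (pi * ang (-x)), 0)"
      using hq ang_bounds[OF rm] by simp
    also have "\<dots> = (fst x / rr x, fst (snd x) / rr x, 0)"
      using ang_cos[OF rm] ang_sin[OF rm] True by simp
    finally show ?thesis .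
  next
    case False
    have "Kmap h (1, x) = h (1, ang x)" using False by (simp add: Kmap_def)
    also have "\<dots> = (cos (pi * ang x), sin (pi * ang x), 0)"
      using hq ang_bounds[OF r] by simp
    also have "\<dots> = (fst x / rr x, fst (snd x) / rr x, 0)"
      using ang_cos[OF r] ang_sin[OF r] False by simp
    finally show ?thesis .
  qed
qed


definition psi :: "real \<Rightarrow> real" where "psi z = max 0 (2*z - 1) + min 0 (2*z + 1)"

lemma psi_cont: "continuous_on A psi"
  unfolding psi_def by (intro continuous_intros)

lemma psi_minus: "psi (- z) = - psi z"
  by (simp add: psi_def max_def min_def)

lemma psi_small: "\<bar>z\<bar> \<le> 1/2 \<Longrightarrow> psi z = 0"
  unfolding psi_def max_def min_def by (auto simp: abs_if split: if_splits)

lemma psi_pm1: "\<bar>z\<bar> = 1 \<Longrightarrow> psi z = z"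
  unfolding psi_def max_def min_def by (auto simp: abs_if split: if_splits)

lemma S2_axis: "x \<in> S2 \<Longrightarrow> fst x = 0 \<Longrightarrow> fst (snd x) = 0 \<Longrightarrow> \<bar>snd (snd x)\<bar> = 1"
  by (simp add: in_S2 power2_eq_1_iff abs_if) (use power2_eq_1_iff in auto)

lemma toN_minus: "toN (- v) = (\<lambda>i. - toN v i)"
  by (auto simp: toN_def fun_eq_iff)

lemma fromN_minus: "fromN (\<lambda>i. - u i) = - fromN u"
  by (simp add: fromN_def)

lemma topspace_nsphere1: "x \<in> topspace (nsphere 1) \<longleftrightarrow> (\<forall>i\<ge>2. x i = 0) \<and> (x 0)^2 + (x 1)^2 = 1"
  by (simp add: nsphere_def topspace_Euclidean_space numeral_2_eq_2)

lemma norm_flat: "norm ((a, b, 0)::R3) = rr (a,b,0)"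
  by (simp add: norm_R3 rr_def)

lemma sgn_flat: "rr x > 0 \<Longrightarrow> sgn ((fst x, fst (snd x), 0)::R3) = (fst x / rr x, fst (snd x) / rr x, 0)"
  by (simp add: sgn_div_norm norm_flat rr_def divide_inverse_commute scaleR_prod_def)

abbreviation x0 :: "R3 \<Rightarrow> real" where "x0 v \<equiv> fst v"
abbreviation x1 :: "R3 \<Rightarrow> real" where "x1 v \<equiv> fst (snd v)"
abbreviation x2 :: "R3 \<Rightarrow> real" where "x2 v \<equiv> snd (snd v)"

lemma nz_psi: "x \<in> S2 \<Longrightarrow> s \<in> {0..1} \<Longrightarrow> (x0 x, x1 x, (1 - s) * psi (x2 x) + s * x2 x) \<noteq> 0"
proof
  assume x: "x \<in> S2" and s: "s \<in> {0..1}" and e: "(x0 x, x1 x, (1 - s) * psi (x2 x) + s * x2 x) = 0"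
  then have a: "\<bar>x2 x\<bar> = 1" using S2_axis by (simp add: zero_prod_def)
  then have "psi (x2 x) = x2 x" by (rule psi_pm1)
  then have "(1 - s) * psi (x2 x) + s * x2 x = x2 x" by (simp add: algebra_simps)
  then show False using e a by (simp add: zero_prod_def)
qed

lemma sgn_S2: "v \<noteq> 0 \<Longrightarrow> sgn v \<in> S2"
  by (simp add: norm_sgn)

lemma borsuk_e0:
  assumes gc: "continuous_on S2 g" and gS: "g \<in> S2 \<rightarrow> S2"
    and godd: "\<And>x. x \<in> S2 \<Longrightarrow> g (- x) = - g x"
    and ge: "g (1,0,0) = (1,0,0)"
  shows "odd (Brouwer_degree2 2 (tr g))"
proof -
  define q :: "real \<Rightarrow> R3" where "q s = (cos (pi * s), sin (pi * s), 0)" for s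
  define p where "p = g \<circ> q"
  have qS: "q s \<in> S2" for s by (simp add: q_def in_S2)
  have qc: "continuous_on UNIV q" unfolding q_def by (intro continuous_intros)
  have pq: "path q" "path_image q \<subseteq> S2"
    using qS by (auto simp: path_def path_image_def intro: continuous_on_subset[OF qc])
  have pp: "path p" "path_image p \<subseteq> S2"
  proof -
    have "continuous_on {0..1} p" unfolding p_def
      by (rule continuous_on_compose[OF continuous_on_subset[OF qc] continuous_on_subset[OF gc]]) (use qS in auto)
    then show "path p" by (simp add: path_def)
    show "path_image p \<subseteq> S2" using gS qS by (auto simp: path_image_def p_def)
  qed
  have m1: "g (-1, 0, 0) = (-1, 0, 0)" using godd[of "(1,0,0)"] ge by (simp add: in_S2)
  have ends: "pathstart q = pathstart p" "pathfinish q = pathfinish p"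
    using ge m1 by (simp_all add: pathstart_def pathfinish_def p_def q_def)
  have "simply_connected S2" by (rule simply_connected_sphere) simp
  then have "homotopic_paths S2 p q"
    using pq pp ends by (simp add: simply_connected_eq_homotopic_paths)
  then obtain h :: "real \<times> real \<Rightarrow> R3" where H: "continuous_on ({0..1} \<times> {0..1}) h \<and> h \<in> ({0..1} \<times> {0..1}) \<rightarrow> S2 \<and>
      (\<forall>x\<in>{0..1}. h (0, x) = p x) \<and> (\<forall>x\<in>{0..1}. h (1, x) = q x) \<and>
      (\<forall>t\<in>{0..1}. pathstart (h \<circ> Pair t) = pathstart p \<and> pathfinish (h \<circ> Pair t) = pathfinish p)"
    unfolding homotopic_paths by blast
  have hc: "continuous_on ({0..1} \<times> {0..1}) h" and hS: "h \<in> ({0..1} \<times> {0..1}) \<rightarrow> S2"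
    and hp: "\<And>x. x \<in> {0..1} \<Longrightarrow> h (0, x) = p x"
    and hq: "\<And>x. x \<in> {0..1} \<Longrightarrow> h (1, x) = q x"
    and he: "\<And>t. t \<in> {0..1} \<Longrightarrow> pathstart (h \<circ> Pair t) = pathstart p \<and> pathfinish (h \<circ> Pair t) = pathfinish p"
    using H by auto
  interpret hpath h
  proof
    show "continuous_on ({0..1} \<times> {0..1}) h" by (rule hc)
    show "h \<in> ({0..1} \<times> {0..1}) \<rightarrow> S2" by (rule hS)
    show "h (t, 0) = (1, 0, 0)" if "t \<in> {0..1}" for t
      using he[OF that] ends by (simp add: pathstart_def q_def)
    show "h (t, 1) = (-1, 0, 0)" if "t \<in> {0..1}" for t
      using he[OF that] ends by (simp add: pathfinish_def q_def)
  qed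
  have K0: "Kmap h (0, x) = g (x0 x / rr x, x1 x / rr x, 0)" if "x \<in> Cset" for x
    by (rule Kmap_0[where g=g, OF _ godd that]) (simp add: hp p_def q_def)
  have K1: "Kmap h (1, x) = (x0 x / rr x, x1 x / rr x, 0)" if "x \<in> Cset" for x
    by (rule Kmap_1[OF _ that]) (simp add: hq q_def)
  define Phi where "Phi = (\<lambda>z::real \<times> R3. if \<bar>x2 (snd z)\<bar> \<le> 1/2
      then Kmap h (fst z * (1 - 2 * \<bar>x2 (snd z)\<bar>), snd z)
      else g (sgn (x0 (snd z), x1 (snd z), psi (x2 (snd z)))))"
  define Psi where "Psi = (\<lambda>z::real \<times> R3. g (sgn (x0 (snd z), x1 (snd z), (1 - fst z) * psi (x2 (snd z)) + fst z * x2 (snd z))))"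
  define g2 where "g2 x = Phi (1, x)" for x
  have sgnS: "sgn (x0 x, x1 x, (1 - s) * psi (x2 x) + s * x2 x) \<in> S2" if "x \<in> S2" "s \<in> {0..1}" for x s
    using sgn_S2[OF nz_psi[OF that]] .
  have sgnS0: "sgn (x0 x, x1 x, psi (x2 x)) \<in> S2" if "x \<in> S2" for x
    using sgnS[OF that, of 0] by simp
  have nz0: "(x0 x, x1 x, psi (x2 x)) \<noteq> 0" if "x \<in> S2" for x
    using nz_psi[OF that, of 0] by simp
  have Phi_cont: "continuous_on ({0..1} \<times> S2) Phi"
    unfolding Phi_def
  proof (rule continuous_on_cases_le)
    let ?L = "{z \<in> {0..1::real} \<times> S2. \<bar>x2 (snd z)\<bar> \<le> 1/2}"
    have m: "continuous_on ?L (\<lambda>z. (fst z * (1 - 2 * \<bar>x2 (snd z)\<bar>), snd z))"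
      by (intro continuous_intros)
    have mi: "(\<lambda>z. (fst z * (1 - 2 * \<bar>x2 (snd z)\<bar>), snd z)) ` ?L \<subseteq> {0..1} \<times> Cset"
    proof (rule image_subsetI)
      fix z assume z: "z \<in> ?L"
      have a: "0 \<le> fst z" "fst z \<le> 1" "0 \<le> 1 - 2 * \<bar>x2 (snd z)\<bar>" "1 - 2 * \<bar>x2 (snd z)\<bar> \<le> 1"
        using z by auto
      have "fst z * (1 - 2 * \<bar>x2 (snd z)\<bar>) \<in> {0..1}"
        using a mult_le_one[OF a(2) a(3) a(4)] by simp
      then show "(fst z * (1 - 2 * \<bar>x2 (snd z)\<bar>), snd z) \<in> {0..1} \<times> Cset" using z by auto
    qed
    show "continuous_on ?L (\<lambda>z. Kmap h (fst z * (1 - 2 * \<bar>x2 (snd z)\<bar>), snd z))"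
      using continuous_on_compose2[OF Kmap_cont m mi] .
    let ?R = "{z \<in> {0..1::real} \<times> S2. 1/2 \<le> \<bar>x2 (snd z)\<bar>}"
    have c: "continuous_on ?R (\<lambda>z. sgn (x0 (snd z), x1 (snd z), psi (x2 (snd z))))"
      by (intro continuous_intros continuous_on_compose2[OF psi_cont]) (use nz0 in auto)
    have ci: "(\<lambda>z. sgn (x0 (snd z), x1 (snd z), psi (x2 (snd z)))) ` ?R \<subseteq> S2"
      using sgnS0 by auto
    show "continuous_on ?R (\<lambda>z. g (sgn (x0 (snd z), x1 (snd z), psi (x2 (snd z)))))"
      using continuous_on_compose2[OF gc c ci] .
    show "continuous_on ({0..1} \<times> S2) (\<lambda>z. \<bar>x2 (snd z)\<bar>)"
      by (intro continuous_intros)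
    fix z :: "real \<times> R3" assume z: "z \<in> {0..1} \<times> S2" "\<bar>x2 (snd z)\<bar> = 1/2"
    then have zc: "snd z \<in> Cset" by auto
    have "1 - 2 * \<bar>x2 (snd z)\<bar> = 0" using z(2) by simp
    then have "Kmap h (fst z * (1 - 2 * \<bar>x2 (snd z)\<bar>), snd z) = Kmap h (0, snd z)"
      by simp
    also have "\<dots> = g (x0 (snd z) / rr (snd z), x1 (snd z) / rr (snd z), 0)"
      by (rule K0[OF zc])
    also have "\<dots> = g (sgn (x0 (snd z), x1 (snd z), psi (x2 (snd z))))"
      using psi_small[of "x2 (snd z)"] z sgn_flat[OF rr_pos[OF zc]] by simp
    finally show "Kmap h (fst z * (1 - 2 * \<bar>x2 (snd z)\<bar>), snd z) = g (sgn (x0 (snd z), x1 (snd z), psi (x2 (snd z))))" .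
  qed
  have Phi_S: "Phi \<in> ({0..1} \<times> S2) \<rightarrow> S2"
  proof -
    have "Kmap h (t * (1 - 2 * \<bar>x2 x\<bar>), x) \<in> S2" if "t \<in> {0..1}" "x \<in> S2" "\<bar>x2 x\<bar> \<le> 1/2" for t x
    proof -
      have a: "0 \<le> t" "t \<le> 1" "0 \<le> 1 - 2 * \<bar>x2 x\<bar>" "1 - 2 * \<bar>x2 x\<bar> \<le> 1"
        using that by auto
      have "t * (1 - 2 * \<bar>x2 x\<bar>) \<in> {0..1}"
        using a mult_le_one[OF a(2) a(3) a(4)] by simp
      then show ?thesis using Kmap_S2 that by auto
    qed
    moreover have "g (sgn (x0 x, x1 x, psi (x2 x))) \<in> S2" if "x \<in> S2" for x
      using gS sgnS0[OF that] by auto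
    ultimately show ?thesis by (auto simp: Phi_def)
  qed
  have Phi0: "Phi (0, x) = g (sgn (x0 x, x1 x, psi (x2 x)))" if "x \<in> S2" for x
  proof (cases "\<bar>x2 x\<bar> \<le> 1/2")
    case True
    then have xc: "x \<in> Cset" using that by auto
    show ?thesis using True K0[OF xc] psi_small[OF True] sgn_flat[OF rr_pos[OF xc]] by (simp add: Phi_def)
  qed (simp add: Phi_def)
  have Psi_cont: "continuous_on ({0..1} \<times> S2) Psi"
  proof -
    have c: "continuous_on ({0..1} \<times> S2) (\<lambda>z. sgn (x0 (snd z), x1 (snd z), (1 - fst z) * psi (x2 (snd z)) + fst z * x2 (snd z)))"
      by (intro continuous_intros continuous_on_compose2[OF psi_cont]) (use nz_psi in auto)
    have ci: "(\<lambda>z. sgn (x0 (snd z), x1 (snd z), (1 - fst z) * psi (x2 (snd z)) + fst z * x2 (snd z))) ` ({0..1} \<times> S2) \<subseteq> S2"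
      using sgnS by auto
    show ?thesis unfolding Psi_def using continuous_on_compose2[OF gc c ci] .
  qed
  have Psi_S: "Psi \<in> ({0..1} \<times> S2) \<rightarrow> S2"
    using gS sgnS by (auto simp: Psi_def)
  have Psi1: "Psi (1, x) = g x" if "x \<in> S2" for x
  proof -
    have "sgn x = x" using that by (simp add: sgn_div_norm)
    then show ?thesis by (simp add: Psi_def)
  qed
  have hom1: "homotopic_with_canon (\<lambda>_. True) S2 S2 (\<lambda>x. Phi (0, x)) g2"
    by (rule homotopic_canonI[OF Phi_cont Phi_S]) (auto simp: g2_def)
  have hom2: "homotopic_with_canon (\<lambda>_. True) S2 S2 (\<lambda>x. Phi (0, x)) g"
  proof (rule homotopic_canonI[OF Psi_cont Psi_S])
    fix x assume "x \<in> S2"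
    then show "Psi (0, x) = Phi (0, x)" by (simp add: Phi0 Psi_def)
  qed (rule Psi1)
  have degeq: "Brouwer_degree2 2 (tr g2) = Brouwer_degree2 2 (tr g)"
    using hom_tr[OF hom1] hom_tr[OF hom2] by simp
  have g2c: "continuous_on S2 g2"
  proof -
    have "continuous_on S2 (\<lambda>x. (1::real, x))" by (intro continuous_intros)
    moreover have "(\<lambda>x. (1::real, x)) ` S2 \<subseteq> {0..1} \<times> S2" by auto
    ultimately show ?thesis unfolding g2_def using continuous_on_compose2[OF Phi_cont] by blast
  qed
  have g2S: "g2 \<in> S2 \<rightarrow> S2" using Phi_S by (auto simp: g2_def)
  have g2odd: "g2 (- x) = - g2 x" if x: "x \<in> S2" for x
  proof (cases "\<bar>x2 x\<bar> \<le> 1/2")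
    case True
    then have xc: "x \<in> Cset" using x by auto
    have t: "1 - 2 * \<bar>x2 x\<bar> \<in> {0..1}" using True by auto
    show ?thesis using True Kmap_odd[OF xc t] by (simp add: g2_def Phi_def)
  next
    case False
    have "sgn (- x0 x, - x1 x, psi (- x2 x)) = - sgn (x0 x, x1 x, psi (x2 x))"
      by (simp add: psi_minus flip: sgn_minus)
    then show ?thesis using False godd[OF sgnS0[OF x]] by (simp add: g2_def Phi_def)
  qed
  have g2eq: "g2 x = x" if x: "x \<in> S2" "x2 x = 0" for x
  proof -
    have xc: "x \<in> Cset" using x by auto
    have r: "rr x = 1" using x by (simp add: rr_def in_S2)
    have xx: "(x0 x, x1 x, 0) = x" using x(2) by (metis prod.collapse)
    show ?thesis using K1[OF xc] x r xx by (simp add: g2_def Phi_def)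
  qed
  let ?f = "tr g2"
  have fc: "continuous_map (nsphere 2) (nsphere 2) ?f" using cont_tr[OF g2c g2S] .
  have fodd: "(?f \<circ> (\<lambda>x i. - x i)) u = ((\<lambda>x i. - x i) \<circ> ?f) u" if "u \<in> topspace (nsphere 2)" for u
    using g2odd[OF fromN_in[OF that]] by (simp add: tr_def fromN_minus toN_minus)
  have fid: "?f u = u" if "u \<in> topspace (nsphere 1)" for u
  proof -
    have uu: "(\<forall>i\<ge>2. u i = 0) \<and> (u 0)^2 + (u 1)^2 = 1" using that topspace_nsphere1 by blast
    have u2: "u \<in> topspace (nsphere 2)" "u 2 = 0" using uu by (auto simp: topspace_nsphere2)
    have "g2 (fromN u) = fromN u" using g2eq[OF fromN_in[OF u2(1)]] u2 by (simp add: fromN_def)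
    then show ?thesis using toN_fromN[OF u2(1)] by (simp add: tr_def)
  qed
  have fim: "?f \<in> topspace (nsphere (2 - Suc 0)) \<rightarrow> topspace (nsphere (2 - Suc 0))"
    using fid by auto
  have d1: "Brouwer_degree2 (2 - Suc 0) ?f = 1"
  proof -
    have "Brouwer_degree2 1 ?f = Brouwer_degree2 1 id" by (rule Brouwer_degree2_eq) (simp add: fid)
    then show ?thesis by simp
  qed
  have "even (Brouwer_degree2 2 ?f - Brouwer_degree2 (2 - Suc 0) ?f)"
    by (rule Borsuk_odd_mapping_degree_step[OF fc fodd fim])
  then have "odd (Brouwer_degree2 2 ?f)" using d1 by simp
  then show ?thesis using degeq by simp
qed


lemma householder:
  fixes v :: R3
  assumes v: "v \<noteq> 0"
    and H_def: "H = (\<lambda>x. x - (2 * (v \<bullet> x) / (v \<bullet> v)) *\<^sub>R v)"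
  shows "continuous_on S2 H" "H \<in> S2 \<rightarrow> S2" "\<And>x. H (- x) = - H x"
proof -
  show "continuous_on S2 H" unfolding H_def using v by (auto intro!: continuous_intros)
  have vv: "v \<bullet> v \<noteq> 0" using v by simp
  have "H x \<bullet> H x = x \<bullet> x" for x
  proof -
    have "H x \<bullet> H x = x \<bullet> x - 4 * (v \<bullet> x) * (v \<bullet> x) / (v \<bullet> v) + 4 * (v \<bullet> x) * (v \<bullet> x) * (v \<bullet> v) / ((v \<bullet> v) * (v \<bullet> v))"
      unfolding H_def by (simp add: inner_diff_left inner_diff_right algebra_simps power2_eq_square inner_commute)
    also have "\<dots> = x \<bullet> x" using vv by (simp add: field_simps)
    finally show ?thesis .
  qed
  then show "H \<in> S2 \<rightarrow> S2" by (auto simp: norm_eq_sqrt_inner)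
  show "\<And>x. H (- x) = - H x" unfolding H_def by (simp add: algebra_simps)
qed

lemma borsuk:
  assumes gc: "continuous_on S2 g" and gS: "g \<in> S2 \<rightarrow> S2"
    and godd: "\<And>x. x \<in> S2 \<Longrightarrow> g (- x) = - g x"
  shows "odd (Brouwer_degree2 2 (tr g))"
proof (cases "g (1,0,0) = (1,0,0)")
  case True
  then show ?thesis using borsuk_e0[OF gc gS godd] by blast
next
  case False
  define w where "w = g (1,0,0)"
  have wS: "w \<in> S2" using gS by (auto simp: w_def in_S2)
  define v where "v = w - (1,0,0)"
  have v: "v \<noteq> 0" using False by (simp add: v_def w_def)
  define H where "H = (\<lambda>x::R3. x - (2 * (v \<bullet> x) / (v \<bullet> v)) *\<^sub>R v)"
  note HH = householder[OF v H_def]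
  have w1: "fst w \<noteq> 1"
  proof
    assume "fst w = 1"
    then have "(fst (snd w))^2 + (snd (snd w))^2 = 0" using wS by (simp add: in_S2)
    then have "w = (1,0,0)" using \<open>fst w = 1\<close> by (metis prod.collapse sum_power2_eq_zero_iff)
    then show False using False w_def by simp
  qed
  have ww: "w \<bullet> w = 1" using wS by (simp add: norm_eq_sqrt_inner)
  have we: "w \<bullet> (1,0,0) = fst w" "(1,0,0) \<bullet> w = fst w" by (cases w; simp add: inner_Pair)+
  have "v \<bullet> w = 1 - fst w" "v \<bullet> v = 2 - 2 * fst w"
    using ww we by (simp_all add: v_def inner_diff_left inner_diff_right)
  then have c1: "2 * (v \<bullet> w) / (v \<bullet> v) = 1" using w1 v by (simp add: field_simps)
  have "H w = w - 1 *\<^sub>R v" unfolding H_def c1 by (rule refl)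
  then have "H w = w - v" by simp
  then have Hw: "H w = (1,0,0)" by (simp add: v_def)
  have c: "continuous_on S2 (H \<circ> g)"
    by (rule continuous_on_compose[OF gc continuous_on_subset[OF HH(1)]]) (use gS in auto)
  have s: "(H \<circ> g) \<in> S2 \<rightarrow> S2" using gS HH(2) by auto
  have o: "(H \<circ> g) (- x) = - (H \<circ> g) x" if "x \<in> S2" for x using godd[OF that] HH(3) by simp
  have "odd (Brouwer_degree2 2 (tr (H \<circ> g)))"
  proof (rule borsuk_e0[OF c s o])
    have "(H \<circ> g) (1,0,0) = H w" by (simp add: w_def)
    then show "(H \<circ> g) (1,0,0) = (1,0,0)" using Hw by simp
  qed
  then show ?thesis using tr_comp[OF HH(1) HH(2) gc gS] by simp
qed


lemma odd_swap_zero: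
  fixes F :: "real \<times> R3 \<Rightarrow> R3"
  assumes Fc: "continuous_on ({0..1} \<times> S2) F"
    and Fodd: "\<And>t y. t \<in> {0..1} \<Longrightarrow> y \<in> S2 \<Longrightarrow> F (t, - y) = - F (t, y)"
    and Fswap: "\<And>y. y \<in> S2 \<Longrightarrow> F (1, y) = - F (0, y)"
  shows "\<exists>t\<in>{0..1}. \<exists>y\<in>S2. F (t, y) = 0"
proof (rule ccontr)
  assume "\<not> ?thesis"
  then have nz: "\<And>t y. t \<in> {0..1} \<Longrightarrow> y \<in> S2 \<Longrightarrow> F (t, y) \<noteq> 0" by blast
  define G where "G z = sgn (F z)" for z
  have Gc: "continuous_on ({0..1} \<times> S2) G"
    unfolding G_def by (intro continuous_intros Fc) (use nz in auto)
  have GS: "G \<in> ({0..1} \<times> S2) \<rightarrow> S2" using nz by (auto simp: G_def norm_sgn)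
  define g where "g y = G (0, y)" for y
  have gc: "continuous_on S2 g"
  proof -
    have "continuous_on S2 (\<lambda>y. (0::real, y))" by (intro continuous_intros)
    moreover have "(\<lambda>y. (0::real, y)) ` S2 \<subseteq> {0..1} \<times> S2" by auto
    ultimately show ?thesis unfolding g_def using continuous_on_compose2[OF Gc] by blast
  qed
  have gS: "g \<in> S2 \<rightarrow> S2" using GS by (auto simp: g_def)
  have godd: "g (- y) = - g y" if "y \<in> S2" for y
    using Fodd[OF _ that, of 0] by (simp add: g_def G_def sgn_minus)
  have hom: "homotopic_with_canon (\<lambda>_. True) S2 S2 g (uminus \<circ> g)"
    by (rule homotopic_canonI[OF Gc GS]) (auto simp: g_def G_def Fswap sgn_minus)
  have "Brouwer_degree2 2 (tr g) = Brouwer_degree2 2 (tr (uminus \<circ> g))"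
    by (rule hom_tr[OF hom])
  also have "\<dots> = Brouwer_degree2 2 (tr uminus) * Brouwer_degree2 2 (tr g)"
    by (rule tr_comp) (use gc gS in \<open>auto intro: continuous_intros\<close>)
  also have "\<dots> = - Brouwer_degree2 2 (tr g)" by (simp add: deg_neg)
  finally have "Brouwer_degree2 2 (tr g) = 0" by simp
  moreover have "odd (Brouwer_degree2 2 (tr g))" by (rule borsuk[OF gc gS godd])
  ultimately show False by simp
qed


definition sgnf :: "oline \<Rightarrow> oline \<Rightarrow> real^2 \<Rightarrow> real" where
  "sgnf L1 L2 x = (if (x \<in> pos_side L1) = (x \<in> pos_side L2) then 1 else -1)"

definition negl :: "oline \<Rightarrow> oline" where "negl L = (- fst L, - snd L)"

lemma R_plus2: "R_plus [L1, L2] = {x. (x \<in> pos_side L1) = (x \<in> pos_side L2)}"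
  by (auto simp: R_plus_def lam_def)

lemma R_minus2: "R_minus [L1, L2] = - R_plus [L1, L2]"
  by (auto simp: R_plus_def R_minus_def)

lemma pos_closed: "closed (pos_side L)"
  unfolding pos_side_def by (intro closed_Collect_le continuous_intros)

lemma zero_closed: "closed {x. fst L \<bullet> x + snd L = 0}"
  by (intro closed_Collect_eq continuous_intros)

context
  fixes M :: "(real^2) measure"
  assumes md: "mass_distribution M"
begin

lemma md_space: "space M = UNIV" using md by (simp add: mass_distribution_def)

lemma md_finite: "finite_measure M"
proof
  show "emeasure M (space M) \<noteq> \<infinity>" using md by (auto simp: mass_distribution_def)
qed

lemma md_closed: "closed S \<Longrightarrow> S \<in> sets M"
proof -
  assume "closed S"
  then have "- S \<in> sets M" using md by (auto simp: mass_distribution_def open_Compl)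
  then have "space M - (- S) \<in> sets M" by (rule sets.compl_sets)
  then show ?thesis by (simp add: md_space)
qed

lemma md_null: "is_oline L \<Longrightarrow> {x. fst L \<bullet> x + snd L = 0} \<in> null_sets M"
proof -
  assume L: "is_oline L"
  have S: "{x. fst L \<bullet> x + snd L = 0} \<in> sets M" by (rule md_closed[OF zero_closed])
  have "aff_dim {x. fst L \<bullet> x + snd L = 0} < 2"
  proof (cases "fst L = 0")
    case True
    then have "snd L \<noteq> 0" using L by (simp add: is_oline_def)
    then have "{x. fst L \<bullet> x + snd L = 0} = {}" using True by auto
    then show ?thesis by simp
  next
    case False
    have "{x. fst L \<bullet> x + snd L = 0} = {x. fst L \<bullet> x = - snd L}" by (auto simp: algebra_simps)
    then show ?thesis using False by simp
  qed
  then have "emeasure M {x. fst L \<bullet> x + snd L = 0} = 0"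
    using md S by (auto simp: mass_distribution_def)
  then show ?thesis using S by (simp add: null_sets_def)
qed

lemma pos_sets: "pos_side L \<in> sets M" by (rule md_closed[OF pos_closed])

lemma Rplus_sets: "R_plus [L1, L2] \<in> sets M"
proof -
  have "R_plus [L1, L2] = (pos_side L1 \<inter> pos_side L2) \<union> ((space M - pos_side L1) \<inter> (space M - pos_side L2))"
    by (auto simp: R_plus2 md_space)
  also have "\<dots> \<in> sets M" using pos_sets by auto
  finally show ?thesis .
qed

lemma Rminus_sets: "R_minus [L1, L2] \<in> sets M"
proof -
  have "R_minus [L1, L2] = space M - R_plus [L1, L2]" by (simp add: R_minus2 md_space Compl_eq_Diff_UNIV)
  also have "\<dots> \<in> sets M" using Rplus_sets by auto
  finally show ?thesis .
qed

lemma sgnf_meas: "sgnf L1 L2 \<in> borel_measurable M"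
proof -
  have "sgnf L1 L2 = (\<lambda>x. if x \<in> R_plus [L1, L2] then 1 else -1)"
    by (auto simp: sgnf_def R_plus2 fun_eq_iff)
  also have "\<dots> \<in> borel_measurable M"
    by (intro measurable_If_set) (use Rplus_sets in \<open>auto simp: md_space\<close>)
  finally show ?thesis .
qed

lemma sgnf_int: "integrable M (sgnf L1 L2)"
proof -
  interpret finite_measure M by (rule md_finite)
  show ?thesis
    by (rule integrable_const_bound[where B=1]) (auto simp: sgnf_def sgnf_meas)
qed

lemma D_eq: "integral\<^sup>L M (sgnf L1 L2) = measure M (R_plus [L1, L2]) - measure M (R_minus [L1, L2])"
proof -
  interpret finite_measure M by (rule md_finite)
  have "sgnf L1 L2 = (\<lambda>x. indicator (R_plus [L1, L2]) x - indicator (R_minus [L1, L2]) x)"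
    by (auto simp: fun_eq_iff sgnf_def R_plus2 R_minus2 indicator_def)
  then have "integral\<^sup>L M (sgnf L1 L2) = integral\<^sup>L M (indicator (R_plus [L1, L2])) - integral\<^sup>L M (indicator (R_minus [L1, L2]))"
  proof -
    have i: "integrable M (indicat_real (R_plus [L1, L2]))" "integrable M (indicat_real (R_minus [L1, L2]))"
      using Rplus_sets Rminus_sets by (simp_all add: integrable_indicator_iff md_space less_top[symmetric])
    show ?thesis using Bochner_Integration.integral_diff[OF i] \<open>sgnf L1 L2 = _\<close> by simp
  qed
  then show ?thesis using Rplus_sets Rminus_sets by (simp add: less_top[symmetric])
qed

lemma D_bis: "integral\<^sup>L M (sgnf L1 L2) = 0 \<Longrightarrow> bisects [L1, L2] M"
proof -
  interpret finite_measure M by (rule md_finite)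
  assume "integral\<^sup>L M (sgnf L1 L2) = 0"
  then have "measure M (R_plus [L1, L2]) = measure M (R_minus [L1, L2])" using D_eq by simp
  then show ?thesis by (simp add: bisects_def emeasure_eq_measure)
qed

lemma D_neg: "is_oline L2 \<Longrightarrow> integral\<^sup>L M (sgnf L1 (negl L2)) = - integral\<^sup>L M (sgnf L1 L2)"
proof -
  assume L2: "is_oline L2"
  have "AE x in M. sgnf L1 (negl L2) x = - sgnf L1 L2 x"
  proof (rule AE_I')
    show "{x. fst L2 \<bullet> x + snd L2 = 0} \<in> null_sets M" by (rule md_null[OF L2])
    show "{x \<in> space M. \<not> (sgnf L1 (negl L2) x = - sgnf L1 L2 x)} \<subseteq> {x. fst L2 \<bullet> x + snd L2 = 0}"
      by (auto simp: sgnf_def negl_def pos_side_def)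
  qed
  then have "integral\<^sup>L M (sgnf L1 (negl L2)) = integral\<^sup>L M (\<lambda>x. - sgnf L1 L2 x)"
    using integral_cong_AE[of "sgnf L1 (negl L2)" M "\<lambda>x. - sgnf L1 L2 x"] sgnf_meas by auto
  then show ?thesis by simp
qed

end

lemma sgnf_swap: "sgnf (0, -1) L2 x = - sgnf (0, 1) L2 x"
  by (simp add: sgnf_def pos_side_def)

lemma ev_side:
  assumes "(Ls \<longlongrightarrow> L) sequentially" "fst L \<bullet> x + snd L \<noteq> 0"
  shows "eventually (\<lambda>n. (x \<in> pos_side (Ls n)) = (x \<in> pos_side L)) sequentially"
proof -
  have t: "((\<lambda>n. fst (Ls n) \<bullet> x + snd (Ls n)) \<longlongrightarrow> fst L \<bullet> x + snd L) sequentially"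
    by (intro tendsto_intros assms(1))
  show ?thesis
  proof (cases "fst L \<bullet> x + snd L > 0")
    case True
    then have "eventually (\<lambda>n. fst (Ls n) \<bullet> x + snd (Ls n) > 0) sequentially"
      using order_tendstoD(1)[OF t] by blast
    then show ?thesis by eventually_elim (use True in \<open>auto simp: pos_side_def\<close>)
  next
    case False
    then have n: "fst L \<bullet> x + snd L < 0" using assms(2) by simp
    then have "eventually (\<lambda>n. fst (Ls n) \<bullet> x + snd (Ls n) < 0) sequentially"
      using order_tendstoD(2)[OF t] by blast
    then show ?thesis by eventually_elim (use n in \<open>auto simp: pos_side_def\<close>)
  qed
qed


lemma D_cont:
  fixes A B :: "'a::metric_space \<Rightarrow> oline" and M :: "(real^2) measure"
  assumes md: "mass_distribution M"
    and Ac: "continuous_on T A" and Bc: "continuous_on T B"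
    and AB: "\<And>z. z \<in> T \<Longrightarrow> is_oline (A z) \<and> is_oline (B z)"
  shows "continuous_on T (\<lambda>z. integral\<^sup>L M (sgnf (A z) (B z)))"
proof (rule continuous_on_sequentiallyI)
  interpret finite_measure M by (rule md_finite[OF md])
  fix u a assume u: "\<forall>n. u n \<in> T" and a: "a \<in> T" and ua: "u \<longlonglongrightarrow> a"
  have ev: "eventually (\<lambda>n. u n \<in> T) sequentially" using u by simp
  have At: "(\<lambda>n. A (u n)) \<longlonglongrightarrow> A a" by (rule continuous_on_tendsto_compose[OF Ac ua a ev])
  have Bt: "(\<lambda>n. B (u n)) \<longlonglongrightarrow> B a" by (rule continuous_on_tendsto_compose[OF Bc ua a ev])
  show "(\<lambda>n. integral\<^sup>L M (sgnf (A (u n)) (B (u n)))) \<longlonglongrightarrow> integral\<^sup>L M (sgnf (A a) (B a))"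
  proof (rule integral_dominated_convergence[where w="\<lambda>_. 1"])
    show "sgnf (A a) (B a) \<in> borel_measurable M" by (rule sgnf_meas[OF md])
    show "\<And>n. sgnf (A (u n)) (B (u n)) \<in> borel_measurable M" by (rule sgnf_meas[OF md])
    show "integrable M (\<lambda>_. 1::real)" by simp
    show "\<And>n. AE x in M. norm (sgnf (A (u n)) (B (u n)) x) \<le> 1" by (simp add: sgnf_def)
    let ?N = "{x. fst (A a) \<bullet> x + snd (A a) = 0} \<union> {x. fst (B a) \<bullet> x + snd (B a) = 0}"
    show "AE x in M. (\<lambda>n. sgnf (A (u n)) (B (u n)) x) \<longlonglongrightarrow> sgnf (A a) (B a) x"
    proof (rule AE_I')
      show "?N \<in> null_sets M" using md_null[OF md] AB[OF a] by auto
      show "{x \<in> space M. \<not> (\<lambda>n. sgnf (A (u n)) (B (u n)) x) \<longlonglongrightarrow> sgnf (A a) (B a) x} \<subseteq> ?N"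
      proof clarify
        fix x assume nl: "\<not> (\<lambda>n. sgnf (A (u n)) (B (u n)) x) \<longlonglongrightarrow> sgnf (A a) (B a) x"
          and nB: "fst (B a) \<bullet> x + snd (B a) \<noteq> 0"
        show "fst (A a) \<bullet> x + snd (A a) = 0"
        proof (rule ccontr)
          assume nA: "fst (A a) \<bullet> x + snd (A a) \<noteq> 0"
          have "eventually (\<lambda>n. sgnf (A (u n)) (B (u n)) x = sgnf (A a) (B a) x) sequentially"
            using ev_side[OF At nA] ev_side[OF Bt nB] by eventually_elim (simp add: sgnf_def)
          then have "(\<lambda>n. sgnf (A (u n)) (B (u n)) x) \<longlonglongrightarrow> sgnf (A a) (B a) x"
            by (rule tendsto_eventually)
          then show False using nl by simp
        qed
      qed
    qed
  qed
qed


definition l1f :: "(real^2) \<Rightarrow> real \<Rightarrow> oline" where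
  "l1f a t = (sin (pi * t) *\<^sub>R a, cos (pi * t))"
definition l2f :: "R3 \<Rightarrow> oline" where
  "l2f y = (fst y *\<^sub>R (vector [1, 0] :: real^2) + fst (snd y) *\<^sub>R vector [0, 1], snd (snd y))"

lemma l1f_oline: "a \<noteq> 0 \<Longrightarrow> is_oline (l1f a t)"
proof -
  assume a: "a \<noteq> 0"
  have "\<not> (sin (pi * t) = 0 \<and> cos (pi * t) = 0)"
    using sin_cos_squared_add[of "pi * t"] by (metis power_zero_numeral add_0 zero_neq_one)
  then show ?thesis using a by (auto simp: is_oline_def l1f_def)
qed

lemma l2f_oline: "y \<noteq> 0 \<Longrightarrow> is_oline (l2f y)"
proof -
  assume y: "y \<noteq> 0"
  show ?thesis
  proof (rule ccontr)
    assume "\<not> is_oline (l2f y)"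
    then have v: "fst y *\<^sub>R (vector [1, 0] :: real^2) + fst (snd y) *\<^sub>R vector [0, 1] = 0" and c: "snd (snd y) = 0"
      by (auto simp: is_oline_def l2f_def)
    have "fst y = 0" using arg_cong[OF v, of "\<lambda>v. v $ 1"] by simp
    moreover have "fst (snd y) = 0" using arg_cong[OF v, of "\<lambda>v. v $ 2"] by simp
    ultimately have "y = 0" using c by (simp add: prod_eq_iff)
    then show False using y by simp
  qed
qed

lemma l2f_neg: "l2f (- y) = negl (l2f y)"
  by (simp add: l2f_def negl_def algebra_simps)

lemma l1f_cont: "continuous_on UNIV (l1f a)"
  unfolding l1f_def by (intro continuous_intros)

lemma l2f_cont: "continuous_on UNIV l2f"
  unfolding l2f_def by (intro continuous_intros)


theorem theorem3:
  fixes \<mu>1 \<mu>2 \<mu>3 :: "(real^2) measure" and l :: oline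
  assumes "mass_distribution \<mu>1" and "mass_distribution \<mu>2" and "mass_distribution \<mu>3"
    and "is_proper_line l"
  shows "\<exists>l1 l2. is_oline l1 \<and> is_oline l2 \<and> parallel l1 l \<and>
           bisects [l1, l2] \<mu>1 \<and> bisects [l1, l2] \<mu>2 \<and> bisects [l1, l2] \<mu>3"
proof -
  note md = assms(1-3)
  define a where "a = fst l"
  have a: "a \<noteq> 0" using assms(4) by (simp add: a_def is_proper_line_def)
  define D where "D M z = integral\<^sup>L M (sgnf (l1f a (fst z)) (l2f (snd z)))" for M and z :: "real \<times> R3"
  define F where "F z = (D \<mu>1 z, D \<mu>2 z, D \<mu>3 z)" for z
  have Dc: "continuous_on ({0..1} \<times> S2) (D M)" if "mass_distribution M" for M
    unfolding D_def
  proof (rule D_cont[OF that])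
    show "continuous_on ({0..1} \<times> S2) (\<lambda>z. l1f a (fst z))"
      by (rule continuous_on_compose2[OF l1f_cont]) (auto intro: continuous_intros)
    show "continuous_on ({0..1} \<times> S2) (\<lambda>z. l2f (snd z))"
      by (rule continuous_on_compose2[OF l2f_cont]) (auto intro: continuous_intros)
    show "is_oline (l1f a (fst z)) \<and> is_oline (l2f (snd z))" if "z \<in> {0..1} \<times> S2" for z
    proof -
      have "snd z \<noteq> 0" using that by auto
      then show ?thesis using l1f_oline[OF a] l2f_oline by blast
    qed
  qed
  have Fc: "continuous_on ({0..1} \<times> S2) F"
    unfolding F_def using Dc md by (intro continuous_on_Pair) auto
  have Dodd: "D M (t, - y) = - D M (t, y)" if "mass_distribution M" "y \<in> S2" for M t y
  proof -
    have "y \<noteq> 0" using that by auto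
    then show ?thesis unfolding D_def using D_neg[OF that(1) l2f_oline] by (simp add: l2f_neg)
  qed
  have Fodd: "F (t, - y) = - F (t, y)" if "t \<in> {0..1}" "y \<in> S2" for t y
    using Dodd[OF _ that(2)] md by (simp add: F_def)
  have Dswap: "D M (1, y) = - D M (0, y)" for M y
  proof -
    have "l1f a 1 = (0, -1)" "l1f a 0 = (0, 1)" by (simp_all add: l1f_def)
    moreover have "sgnf (0, -1) (l2f y) = (\<lambda>x. - sgnf (0, 1) (l2f y) x)"
      by (rule ext) (rule sgnf_swap)
    ultimately show ?thesis unfolding D_def by simp
  qed
  have Fswap: "F (1, y) = - F (0, y)" if "y \<in> S2" for y
    by (simp add: F_def Dswap)
  obtain t y where t: "t \<in> {0..1}" and y: "y \<in> S2" and F0: "F (t, y) = 0"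
    using odd_swap_zero[OF Fc Fodd Fswap] by blast
  show ?thesis
  proof (intro exI conjI)
    show "is_oline (l1f a t)" by (rule l1f_oline[OF a])
    show "is_oline (l2f y)" using y by (intro l2f_oline) auto
    show "parallel (l1f a t) l" by (auto simp: parallel_def l1f_def a_def)
    show "bisects [l1f a t, l2f y] \<mu>1" using F0 D_bis[OF md(1)] by (simp add: F_def D_def zero_prod_def)
    show "bisects [l1f a t, l2f y] \<mu>2" using F0 D_bis[OF md(2)] by (simp add: F_def D_def zero_prod_def)
    show "bisects [l1f a t, l2f y] \<mu>3" using F0 D_bis[OF md(3)] by (simp add: F_def D_def zero_prod_def)
  qed
qed


end
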